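(* Let $K_1,K_2$ be knots in $S^3$. If $r\in js(K_1\sharp K_2)$, then there exist $r_1\in js(K_1)$ and $r_2\in js(K_2)$ with $r=r_1+r_2$.
   Context: The colored Jones function of $K$ is the sequence $J_{K,n}(q)\in\mathbb{Z}[q^{\pm1}]$, $n\in\mathbb{N}$ (normalized so that the unknot has $J_n=1$ and $J_{K,2}$ is the Jones polynomial); it satisfies $J_{K_1\sharp K_2,n}=J_{K_1,n}J_{K_2,n}$. $\delta_K(n)$ is the maximum $q$-degree of $J_{K,n}(q)$; it is a quadratic quasi-polynomial $c_2(n)n^2+c_1(n)n+c_0(n)$ with rational-valued periodic functions $c_i$ of integral period. $js(K)$ is the set of cluster points (limits of subsequences) of $\{4\delta_K(n)/n^2\}_{n\in\mathbb{N}}$, which equals the finite set of values of $4c_2(n)$. *)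

theory Defs
  imports "HOL-Analysis.Analysis" "HOL-Computational_Algebra.Formal_Laurent_Series"
begin

text \<open>Laurent polynomials in Z[q^{+-1}] are modelled as integer formal Laurent series
  with finitely many nonzero coefficients.\<close>

definition laurent_poly :: "int fls \<Rightarrow> bool" where
  "laurent_poly f \<longleftrightarrow> finite {d. fls_nth f d \<noteq> 0}"

definition max_qdeg :: "int fls \<Rightarrow> int" where
  "max_qdeg f = Max {d. fls_nth f d \<noteq> 0}"

text \<open>Colored Jones function J (indexed by n >= 1) and its degree function delta_K(n).\<close>
definition jdelta :: "(nat \<Rightarrow> int fls) \<Rightarrow> nat \<Rightarrow> int" where
  "jdelta J n = max_qdeg (J n)"

definition quadratic_quasi_poly :: "(nat \<Rightarrow> int) \<Rightarrow> bool" where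
  "quadratic_quasi_poly \<delta> \<longleftrightarrow>
     (\<exists>c2 c1 c0 :: nat \<Rightarrow> real. \<exists>p::nat. p > 0 \<and>
        (\<forall>n. c2 (n + p) = c2 n \<and> c1 (n + p) = c1 n \<and> c0 (n + p) = c0 n) \<and>
        (\<forall>n. c2 n \<in> \<rat> \<and> c1 n \<in> \<rat> \<and> c0 n \<in> \<rat>) \<and>
        (\<forall>n\<ge>1. real_of_int (\<delta> n) = c2 n * (real n)^2 + c1 n * real n + c0 n))"

definition js :: "(nat \<Rightarrow> int fls) \<Rightarrow> real set" where
  "js J = {r. \<exists>s::nat \<Rightarrow> nat. strict_mono s \<and>
             (\<lambda>k. 4 * real_of_int (jdelta J (s k)) / (real (s k))^2) \<longlonglongrightarrow> r}"

end

theory Submission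
  imports Defs
begin

lemma supp_max:
  fixes f :: "int fls"
  assumes "laurent_poly f" "f \<noteq> 0"
  shows "fls_nth f (max_qdeg f) \<noteq> 0" "\<And>d. fls_nth f d \<noteq> 0 \<Longrightarrow> d \<le> max_qdeg f"
proof -
  have fin: "finite {d. fls_nth f d \<noteq> 0}" using assms(1) by (simp add: laurent_poly_def)
  have ne: "{d. fls_nth f d \<noteq> 0} \<noteq> {}" using assms(2) by (auto simp: fls_eq_iff)
  show "fls_nth f (max_qdeg f) \<noteq> 0" using Max_in[OF fin ne] by (simp add: max_qdeg_def)
  show "\<And>d. fls_nth f d \<noteq> 0 \<Longrightarrow> d \<le> max_qdeg f" using Max_ge[OF fin] by (simp add: max_qdeg_def)
qed

lemma max_qdeg_mult:
  fixes f g :: "int fls"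
  assumes f: "laurent_poly f" "f \<noteq> 0" and g: "laurent_poly g" "g \<noteq> 0"
  shows "max_qdeg (f * g) = max_qdeg f + max_qdeg g"
proof -
  define M where "M = max_qdeg f"
  define N where "N = max_qdeg g"
  note fM = supp_max[OF f, folded M_def]
  note gN = supp_max[OF g, folded N_def]
  define df where "df = fls_subdegree f"
  define dg where "dg = fls_subdegree g"
  have dfM: "df \<le> M" using fM(1) fls_subdegree_leI df_def by blast
  have dgN: "dg \<le> N" using gN(1) fls_subdegree_leI dg_def by blast
  have above: "fls_nth (f * g) n = 0" if "n > M + N" for n
  proof -
    have "fls_nth (f * g) n = (\<Sum>i=df..n - dg. fls_nth f i * fls_nth g (n - i))"
      using fls_times_nth(2) df_def dg_def by blast
    also have "\<dots> = 0"
    proof (rule sum.neutral, intro ballI)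
      fix i assume "i \<in> {df..n-dg}"
      show "fls_nth f i * fls_nth g (n - i) = 0"
      proof (cases "i \<le> M")
        case True
        then have "n - i > N" using that by linarith
        then have "fls_nth g (n - i) = 0" using gN(2) by force
        then show ?thesis by simp
      next
        case False
        then have "fls_nth f i = 0" using fM(2) by force
        then show ?thesis by simp
      qed
    qed
    finally show ?thesis .
  qed
  have at: "fls_nth (f * g) (M + N) \<noteq> 0"
  proof -
    have "fls_nth (f * g) (M + N) = (\<Sum>i=df..M + N - dg. fls_nth f i * fls_nth g (M + N - i))"
      using fls_times_nth(2) df_def dg_def by blast
    also have "\<dots> = (\<Sum>i\<in>{M}. fls_nth f i * fls_nth g (M + N - i))"
    proof (rule sum.mono_neutral_right)
      show "{M} \<subseteq> {df..M + N - dg}" using dfM dgN by auto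
      show "\<forall>i\<in>{df..M + N - dg} - {M}. fls_nth f i * fls_nth g (M + N - i) = 0"
      proof
        fix i assume "i \<in> {df..M + N - dg} - {M}"
        then have "i \<noteq> M" by simp
        show "fls_nth f i * fls_nth g (M + N - i) = 0"
        proof (cases "i < M")
          case True
          then have "M + N - i > N" by linarith
          then have "fls_nth g (M + N - i) = 0" using gN(2) by force
          then show ?thesis by simp
        next
          case False
          then have "i > M" using \<open>i \<noteq> M\<close> by linarith
          then have "fls_nth f i = 0" using fM(2) by force
          then show ?thesis by simp
        qed
      qed
    qed simp
    also have "\<dots> = fls_nth f M * fls_nth g N" by simp
    also have "\<dots> \<noteq> 0" using fM(1) gN(1) by simp
    finally show ?thesis .
  qed
  have sub: "{d. fls_nth (f * g) d \<noteq> 0} \<subseteq> {df + dg..M + N}"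
  proof
    fix d assume "d \<in> {d. fls_nth (f * g) d \<noteq> 0}"
    then have "fls_nth (f * g) d \<noteq> 0" by simp
    then have "\<not> d < df + dg" "\<not> d > M + N"
      using fls_times_nth_eq0[of d f g] above df_def dg_def by auto
    then show "d \<in> {df + dg..M + N}" by simp
  qed
  have fin: "finite {d. fls_nth (f * g) d \<noteq> 0}" using finite_subset[OF sub] by simp
  show ?thesis unfolding max_qdeg_def[of "f*g"] M_def[symmetric] N_def[symmetric]
  proof (rule Max_eqI[OF fin])
    fix y assume "y \<in> {d. fls_nth (f * g) d \<noteq> 0}"
    then show "y \<le> M + N" using above by force
  next
    show "M + N \<in> {d. fls_nth (f * g) d \<noteq> 0}" using at by simp
  qed
qed

lemma periodic_bound:
  fixes c :: "nat \<Rightarrow> real"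
  assumes "p > 0" "\<And>n. c (n + p) = c n"
  shows "\<exists>B. \<forall>n. \<bar>c n\<bar> \<le> B"
proof -
  have cmod: "c n = c (n mod p)" for n
  proof (induction n rule: less_induct)
    case (less n)
    show ?case
    proof (cases "n < p")
      case True then show ?thesis by simp
    next
      case False
      then have "n = (n - p) + p" by simp
      then have "c n = c (n - p)" using assms(2) by metis
      also have "\<dots> = c ((n - p) mod p)" using less assms(1) False by simp
      also have "(n - p) mod p = n mod p" using False by (simp add: mod_if)
      finally show ?thesis .
    qed
  qed
  have "\<bar>c n\<bar> \<le> Max ((\<lambda>i. \<bar>c i\<bar>) ` {..<p})" for n
  proof -
    have "n mod p \<in> {..<p}" using assms(1) by simp
    then have "\<bar>c (n mod p)\<bar> \<in> (\<lambda>i. \<bar>c i\<bar>) ` {..<p}" by blast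
    then have "\<bar>c (n mod p)\<bar> \<le> Max ((\<lambda>i. \<bar>c i\<bar>) ` {..<p})" by (intro Max_ge) auto
    then show ?thesis using cmod[of n] by simp
  qed
  then show ?thesis by blast
qed

lemma qqp_bounded:
  assumes "quadratic_quasi_poly \<delta>"
  shows "\<exists>B. \<forall>n. \<bar>4 * real_of_int (\<delta> n) / (real n)^2\<bar> \<le> B"
proof -
  obtain c2 c1 c0 :: "nat \<Rightarrow> real" and p :: nat where p: "p > 0"
    and per: "\<And>n. c2 (n + p) = c2 n \<and> c1 (n + p) = c1 n \<and> c0 (n + p) = c0 n"
    and eq: "\<And>n. n \<ge> 1 \<Longrightarrow> real_of_int (\<delta> n) = c2 n * (real n)^2 + c1 n * real n + c0 n"
    using assms unfolding quadratic_quasi_poly_def by blast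
  obtain B2 where B2: "\<And>n. \<bar>c2 n\<bar> \<le> B2" using periodic_bound[OF p, of c2] per by blast
  obtain B1 where B1: "\<And>n. \<bar>c1 n\<bar> \<le> B1" using periodic_bound[OF p, of c1] per by blast
  obtain B0 where B0: "\<And>n. \<bar>c0 n\<bar> \<le> B0" using periodic_bound[OF p, of c0] per by blast
  have "\<bar>4 * real_of_int (\<delta> n) / (real n)^2\<bar> \<le> 4 * (B2 + B1 + B0)" for n
  proof (cases "n = 0")
    case True
    have "0 \<le> B2" "0 \<le> B1" "0 \<le> B0" using B2[of 0] B1[of 0] B0[of 0] by auto
    then show ?thesis using True by simp
  next
    case False
    then have n1: "real n \<ge> 1" by simp
    have "4 * real_of_int (\<delta> n) / (real n)^2 = 4 * (c2 n + c1 n / real n + c0 n / (real n)^2)"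
      using eq[of n] False n1 by (simp add: field_simps power2_eq_square)
    also have "\<bar>\<dots>\<bar> \<le> 4 * (\<bar>c2 n\<bar> + \<bar>c1 n / real n\<bar> + \<bar>c0 n / (real n)^2\<bar>)"
    proof -
      have "\<And>x y z::real. \<bar>4 * (x + y + z)\<bar> \<le> 4 * (\<bar>x\<bar> + \<bar>y\<bar> + \<bar>z\<bar>)" by (simp add: abs_mult)
      then show ?thesis by blast
    qed
    also have "\<dots> \<le> 4 * (B2 + B1 + B0)"
    proof -
      have "\<bar>c1 n / real n\<bar> \<le> \<bar>c1 n\<bar>" using n1
        by (simp add: abs_div divide_le_eq mult_le_cancel_left1 abs_mult)
      moreover have "\<bar>c0 n / (real n)^2\<bar> \<le> \<bar>c0 n\<bar>"
      proof -
        have "(real n)^2 \<ge> 1" using n1 by (simp add: one_le_power)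
        then show ?thesis
          by (simp add: abs_div divide_le_eq) (metis abs_ge_zero mult_le_cancel_left1 linorder_not_le mult.commute)
      qed
      ultimately show ?thesis using B2[of n] B1[of n] B0[of n] by (smt (verit))
    qed
    finally show ?thesis .
  qed
  then show ?thesis by blast
qed

theorem lemma2p1:
  fixes J1 J2 J12 :: "nat \<Rightarrow> int fls" and r :: real
  assumes lp1: "\<And>n. n \<ge> 1 \<Longrightarrow> laurent_poly (J1 n) \<and> J1 n \<noteq> 0"
    and lp2: "\<And>n. n \<ge> 1 \<Longrightarrow> laurent_poly (J2 n) \<and> J2 n \<noteq> 0"
    and qp1: "quadratic_quasi_poly (jdelta J1)"
    and qp2: "quadratic_quasi_poly (jdelta J2)"
    and connsum: "\<And>n. n \<ge> 1 \<Longrightarrow> J12 n = J1 n * J2 n"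
    and r: "r \<in> js J12"
  shows "\<exists>r1 \<in> js J1. \<exists>r2 \<in> js J2. r = r1 + r2"
proof -
  define a where "a = (\<lambda>n. 4 * real_of_int (jdelta J1 n) / (real n)^2)"
  define b where "b = (\<lambda>n. 4 * real_of_int (jdelta J2 n) / (real n)^2)"
  define c where "c = (\<lambda>n. 4 * real_of_int (jdelta J12 n) / (real n)^2)"
  have cab: "c n = a n + b n" for n
  proof (cases "n = 0")
    case True then show ?thesis by (simp add: a_def b_def c_def)
  next
    case False
    then have "jdelta J12 n = jdelta J1 n + jdelta J2 n"
      using connsum[of n] lp1[of n] lp2[of n] max_qdeg_mult by (simp add: jdelta_def)
    then show ?thesis by (simp add: a_def b_def c_def add_divide_distrib distrib_left)
  qed
  obtain s where s: "strict_mono s" and cs: "(\<lambda>k. c (s k)) \<longlonglongrightarrow> r"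
    using r unfolding js_def c_def by blast
  obtain B where B: "\<And>n. \<bar>a n\<bar> \<le> B" using qqp_bounded[OF qp1] unfolding a_def by blast
  have "bounded (range (\<lambda>k. a (s k)))"
    unfolding bounded_iff using B by (auto simp: real_norm_def)
  then obtain l t where t: "strict_mono (t::nat\<Rightarrow>nat)" and at: "((\<lambda>k. a (s k)) \<circ> t) \<longlonglongrightarrow> l"
    using bounded_imp_convergent_subsequence by blast
  have st: "strict_mono (s \<circ> t)" using s t strict_mono_o by blast
  have a1: "(\<lambda>k. a ((s \<circ> t) k)) \<longlonglongrightarrow> l" using at by (simp add: o_def)
  have c1: "(\<lambda>k. c ((s \<circ> t) k)) \<longlonglongrightarrow> r"
    using LIMSEQ_subseq_LIMSEQ[OF cs t] by (simp add: o_def)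
  have b1: "(\<lambda>k. b ((s \<circ> t) k)) \<longlonglongrightarrow> r - l"
    using tendsto_diff[OF c1 a1] by (simp add: cab)
  have "l \<in> js J1" unfolding js_def using st a1 a_def by blast
  moreover have "r - l \<in> js J2" unfolding js_def using st b1 b_def by blast
  ultimately show ?thesis by force
qed

end
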